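(* Let $N\ge1$, $d\ge1$, $\varepsilon>0$, $(c_\ell)_{-N\le\ell\le N}\in\mathbb{C}^{2N+1}$, $\alpha,\beta\in\mathbb{C}^d$, and let $\mathcal L(t,\mathbf x,\dot{\mathbf x})$ be a lagrangian, continuous in $t\in[a,b]$ and continuously complex-differentiable in $(\mathbf x,\dot{\mathbf x})\in\mathbb{C}^d\times\mathbb{C}^d$. Let $\mathbf x\in\mathcal C_{pw}(d,N,\alpha,\beta)$ be a critical point of the discrete action \[ \mathcal A_{disc}(\mathbf x)=\int_a^b\mathcal L(t,\mathbf x(t),\Box_\varepsilon\mathbf x(t))\,dt, \] i.e. $\frac{d}{d\eta}\big|_{\eta=0}\mathcal A_{disc}(\mathbf x+\eta\mathbf h)=0$ for every $\mathbf h\in\mathcal C_{pw}(d,N,0,0)$. Then for every $j\in\{1,\dots,d\}$, \[ \Box_{-\varepsilon}\Big[\frac{\partial\mathcal L}{\partial\dot x_j}(\cdot,\mathbf x(\cdot),\Box_\varepsilon\mathbf x(\cdot))\Big](t)+\frac{\partial\mathcal L}{\partial x_j}(t,\mathbf x(t),\Box_\varepsilon\mathbf x(t))=0 \] for (almost) every $t\in[a,b]$; explicitly, $\sum_{\ell=-N}^{N}c_\ell\,\chi_\ell(t)\,\frac{\partial\mathcal L}{\partial\dot x_j}\big(t-\ell\varepsilon,\mathbf x(t-\ell\varepsilon),\Box_\varepsilon\mathbf x(t-\ell\varepsilon)\big)+\frac{\partial\mathcal L}{\partial x_j}(t,\mathbf x(t),\Box_\varepsilon\mathbf x(t))=0$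.
   Context: Fix $[a,b]$ and $\varepsilon>0$. For each integer $\ell$, $\chi_\ell$ is the indicator function of $[\max(a,a+\ell\varepsilon),\min(b,b+\ell\varepsilon)]$; a term multiplied by a vanishing $\chi_\ell$ is taken to be $0$. For $\alpha,\beta\in\mathbb{C}^d$, $\mathcal C_{pw}(d,N,\alpha,\beta)$ is the set of functions $\mathbf x:[a,b]\to\mathbb{C}^d$ with $\mathbf x(a)=\alpha$, $\mathbf x(b)=\beta$, continuous on each interval $[a+\ell\varepsilon,a+(\ell+1)\varepsilon]\cap[a,b]$, $\ell\in\mathbb{Z}$ (with the topology of uniform convergence). Given coefficients $(c_\ell)_{-N\le \ell\le N}$, the generalized scale derivative is \[ \Box_\varepsilon\mathbf x(t)=\sum_{\ell=-N}^{N}c_\ell\,\mathbf x(t+\ell\varepsilon)\chi_{-\ell}(t),\qquad t\in[a,b], \] acting componentwise, and $\Box_{-\varepsilon}$ denotes the operator obtained by replacing $\varepsilon$ with $-\varepsilon$ while keeping the same coefficients $c_\ell$: \[ \Box_{-\varepsilon}\mathbf f(t)=\sum_{\ell=-N}^{N}c_\ell\,\mathbf f(t-\ell\varepsilon)\chi_{\ell}(t). \] *)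

theory Defs
  imports "HOL-Analysis.Analysis"
begin

definition chi_set :: "real \<Rightarrow> real \<Rightarrow> real \<Rightarrow> int \<Rightarrow> real set" where
  "chi_set a b eps l = {max a (a + of_int l * eps) .. min b (b + of_int l * eps)}"

definition box_eps ::
  "real \<Rightarrow> real \<Rightarrow> real \<Rightarrow> nat \<Rightarrow> (int \<Rightarrow> complex) \<Rightarrow> (real \<Rightarrow> complex^'d) \<Rightarrow> real \<Rightarrow> complex^'d" where
  "box_eps a b eps N c x t =
     (\<chi> j. \<Sum>l\<in>{-int N..int N}.
        (if t \<in> chi_set a b eps (-l) then c l * (x (t + of_int l * eps) $ j) else 0))"

text \<open>The operator with eps replaced by -eps (same coefficients), on scalar functions.\<close>
definition box_meps ::
  "real \<Rightarrow> real \<Rightarrow> real \<Rightarrow> nat \<Rightarrow> (int \<Rightarrow> complex) \<Rightarrow> (real \<Rightarrow> complex) \<Rightarrow> real \<Rightarrow> complex" where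
  "box_meps a b eps N c f t =
     (\<Sum>l\<in>{-int N..int N}.
        (if t \<in> chi_set a b eps l then c l * f (t - of_int l * eps) else 0))"

definition Cpw :: "real \<Rightarrow> real \<Rightarrow> real \<Rightarrow> complex^'d \<Rightarrow> complex^'d \<Rightarrow> (real \<Rightarrow> complex^'d) set" where
  "Cpw a b eps alpha beta =
     {x. x a = alpha \<and> x b = beta \<and>
         (\<forall>l::int. continuous_on ({a + of_int l * eps .. a + (of_int l + 1) * eps} \<inter> {a..b}) x)}"

definition action_disc ::
  "real \<Rightarrow> real \<Rightarrow> real \<Rightarrow> nat \<Rightarrow> (int \<Rightarrow> complex)
   \<Rightarrow> (real \<Rightarrow> complex^'d \<Rightarrow> complex^'d \<Rightarrow> complex) \<Rightarrow> (real \<Rightarrow> complex^'d) \<Rightarrow> complex" where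
  "action_disc a b eps N c L x = integral {a..b} (\<lambda>t. L t (x t) (box_eps a b eps N c x t))"

definition upd_vec :: "complex^'d \<Rightarrow> 'd \<Rightarrow> complex \<Rightarrow> complex^'d" where
  "upd_vec x j z = (\<chi> i. if i = j then z else x $ i)"

definition dL_dx :: "(real \<Rightarrow> complex^'d \<Rightarrow> complex^'d \<Rightarrow> complex) \<Rightarrow> 'd \<Rightarrow> real \<Rightarrow> complex^'d \<Rightarrow> complex^'d \<Rightarrow> complex" where
  "dL_dx L j t x v = deriv (\<lambda>z. L t (upd_vec x j z) v) (x $ j)"

definition dL_dv :: "(real \<Rightarrow> complex^'d \<Rightarrow> complex^'d \<Rightarrow> complex) \<Rightarrow> 'd \<Rightarrow> real \<Rightarrow> complex^'d \<Rightarrow> complex^'d \<Rightarrow> complex" where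
  "dL_dv L j t x v = deriv (\<lambda>z. L t x (upd_vec v j z)) (v $ j)"

end

theory Submission
  imports Defs
begin


lemma upd_nth[simp]: "upd_vec y j z $ i = (if i = j then z else y $ i)"
  by (simp add: upd_vec_def)

lemma upd_same[simp]: "upd_vec y j (y $ j) = y"
  by (simp add: upd_vec_def vec_eq_iff)

lemma upd_upd[simp]: "upd_vec (upd_vec y j z) j w = upd_vec y j w"
  by (simp add: upd_vec_def vec_eq_iff)

lemma norm_axis_c: "norm (axis j (w::complex)) = norm w"
proof -
  have "(\<Sum>i\<in>UNIV. (norm (axis j w $ i))^2) = (\<Sum>i\<in>UNIV. if i = j then (norm w)^2 else 0)"
    by (rule sum.cong) (auto simp: axis_def)
  also have "\<dots> = (norm w)^2" by simp
  finally show ?thesis by (simp add: norm_vec_def L2_set_def)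
qed

lemma norm_upd_diff: "norm (upd_vec y j z - y) = norm (z - y $ j)"
proof -
  have "upd_vec y j z - y = axis j (z - y $ j)"
    by (simp add: vec_eq_iff axis_def)
  then show ?thesis by (simp add: norm_axis_c)
qed

lemma norm_upd_le: "norm (upd_vec y j (y $ j + w)) \<le> norm y + norm w"
proof -
  have "norm (upd_vec y j (y $ j + w)) \<le> norm (upd_vec y j (y $ j + w) - y) + norm y"
    using norm_triangle_sub[of "upd_vec y j (y $ j + w)" y] by linarith
  then show ?thesis by (simp add: norm_upd_diff)
qed

lemma cpw_cont:
  assumes "x \<in> Cpw a b eps alpha beta" "eps > 0"
  shows "continuous_on {a..b} x"
proof -
  define n where "n = nat \<lceil>(b - a) / eps\<rceil>"
  define U where "U = (\<lambda>l::int. {a + of_int l * eps .. a + (of_int l + 1) * eps} \<inter> {a..b})"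
  have "continuous_on (\<Union>l\<in>int ` {0..n}. U l) x"
    using assms by (intro continuous_on_closed_Union) (auto simp: U_def Cpw_def)
  moreover have "{a..b} \<subseteq> (\<Union>l\<in>int ` {0..n}. U l)"
  proof
    fix t assume t: "t \<in> {a..b}"
    define l where "l = \<lfloor>(t - a) / eps\<rfloor>"
    have l0: "l \<ge> 0" using t assms by (auto simp: l_def)
    have "of_int l \<le> (t - a)/eps" "(t-a)/eps < of_int l + 1" unfolding l_def by linarith+
    then have 1: "a + of_int l * eps \<le> t" "t \<le> a + (of_int l + 1) * eps"
      using assms by (auto simp: field_simps)
    have "l \<le> \<lceil>(b - a) / eps\<rceil>" unfolding l_def using t assms
      by (intro floor_le_ceiling[THEN order_trans] ceiling_mono) (auto simp: divide_right_mono)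
    then have "nat l \<in> {0..n}" using l0 by (auto simp: n_def)
    moreover have "t \<in> U (int (nat l))" using l0 1 t by (auto simp: U_def)
    ultimately show "t \<in> (\<Union>l\<in>int ` {0..n}. U l)" by blast
  qed
  ultimately show ?thesis by (rule continuous_on_subset)
qed



lemma bm_integrable:
  fixes f :: "real \<Rightarrow> 'b::euclidean_space"
  assumes "f \<in> borel_measurable borel" "\<And>t. t \<in> {a..b} \<Longrightarrow> norm (f t) \<le> B"
  shows "f integrable_on {a..b}"
proof (rule measurable_bounded_by_integrable_imp_integrable[where g = "\<lambda>_. B"])
  show "f \<in> borel_measurable (lebesgue_on {a..b})"
    using assms(1) by (simp add: measurable_completion measurable_restrict_space1 measurable_lborel2)
qed (use assms in auto)

lemma box_eps_expand:
  "box_eps a b eps N c x t =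
     (\<Sum>l\<in>{-int N..int N}. indicator (chi_set a b eps (-l)) t *\<^sub>R (c l *s x (t + of_int l * eps)))"
  unfolding box_eps_def vec_eq_iff sum_component by (auto intro!: sum.cong simp: indicator_def)

lemma cont_smult[continuous_intros]:
  "continuous_on S f \<Longrightarrow> continuous_on S (\<lambda>t. (k::complex) *s (f t :: complex^'d))"
  unfolding vector_scalar_mult_def by (intro continuous_intros)

lemma meas_test:
  fixes X :: "real \<Rightarrow> complex^'d"
  assumes "continuous_on UNIV X"
  shows "(\<lambda>t. box_eps a b eps N c X t) \<in> borel_measurable borel"
  unfolding box_eps_expand
proof (intro borel_measurable_sum borel_measurable_scaleR)
  fix l show "(\<lambda>t. c l *s X (t + of_int l * eps)) \<in> borel_measurable borel"
    by (intro borel_measurable_continuous_onI continuous_intros continuous_on_compose2[OF assms]) auto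
qed (auto simp: chi_set_def)

lemma meas_test2:
  fixes F :: "real \<times> (complex^'d) \<times> (complex^'d) \<Rightarrow> complex"
  assumes "continuous_on UNIV F" "X \<in> borel_measurable borel" "V \<in> borel_measurable borel"
  shows "(\<lambda>t. F (t, X t, V t)) \<in> borel_measurable borel"
  using assms by (intro measurable_compose[OF _ borel_measurable_continuous_onI[OF assms(1)]]) measurable



lemma seg_bound:
  fixes f :: "complex \<Rightarrow> complex"
  assumes d: "\<And>z. z \<in> closed_segment u (u + p) \<Longrightarrow> f field_differentiable (at z)"
    and e: "\<And>z. z \<in> closed_segment u (u + p) \<Longrightarrow> norm (deriv f z - A) \<le> e"
  shows "norm (f (u + p) - f u - A * p) \<le> e * norm p"
proof -
  have "norm ((f (u + p) - A * (u + p)) - (f u - A * u)) \<le> e * norm ((u + p) - u)"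
  proof (rule field_differentiable_bound[where f = "\<lambda>z. f z - A * z" and f' = "\<lambda>z. deriv f z - A"])
    fix z assume z: "z \<in> closed_segment u (u + p)"
    have "(f has_field_derivative deriv f z) (at z)"
      using d[OF z] by (rule field_differentiable_derivI)
    then have "((\<lambda>z. f z - A * z) has_field_derivative deriv f z - A * 1) (at z)"
      by (auto intro!: derivative_eq_intros)
    then show "((\<lambda>z. f z - A * z) has_field_derivative deriv f z - A) (at z within closed_segment u (u + p))"
      by (simp add: has_field_derivative_at_within)
  qed (use e in auto)
  then show ?thesis by (simp add: algebra_simps)
qed

lemma two_step_est:
  fixes L :: "real \<Rightarrow> complex^'d \<Rightarrow> complex^'d \<Rightarrow> complex"
  assumes hx: "\<And>y v. (\<lambda>z. L t (upd_vec y j z) v) field_differentiable (at (y $ j))"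
    and hv: "\<And>y v. (\<lambda>z. L t y (upd_vec v j z)) field_differentiable (at (v $ j))"
    and ex: "\<And>z. z \<in> closed_segment (y$j) (y$j + p) \<Longrightarrow>
               norm (dL_dx L j t (upd_vec y j z) (upd_vec v j (v$j + q)) - A) \<le> e"
    and ev: "\<And>w. w \<in> closed_segment (v$j) (v$j + q) \<Longrightarrow>
               norm (dL_dv L j t y (upd_vec v j w) - B) \<le> e"
  shows "norm (L t (upd_vec y j (y$j + p)) (upd_vec v j (v$j + q)) - L t y v - (A * p + B * q))
          \<le> e * (norm p + norm q)"
proof -
  define V1 where "V1 = upd_vec v j (v$j + q)"
  have 1: "norm (L t (upd_vec y j (y$j + p)) V1 - L t (upd_vec y j (y$j)) V1 - A * p) \<le> e * norm p"
  proof (rule seg_bound[where f = "\<lambda>z. L t (upd_vec y j z) V1"])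
    fix z
    have "(\<lambda>z'. L t (upd_vec (upd_vec y j z) j z') V1) field_differentiable (at ((upd_vec y j z) $ j))"
      by (rule hx)
    then show "(\<lambda>z. L t (upd_vec y j z) V1) field_differentiable (at z)" by simp
    assume "z \<in> closed_segment (y$j) (y$j + p)"
    with ex[of z] show "norm (deriv (\<lambda>z. L t (upd_vec y j z) V1) z - A) \<le> e"
      by (simp add: dL_dx_def V1_def)
  qed
  have 2: "norm (L t y (upd_vec v j (v$j + q)) - L t y (upd_vec v j (v$j)) - B * q) \<le> e * norm q"
  proof (rule seg_bound[where f = "\<lambda>w. L t y (upd_vec v j w)"])
    fix w
    have "(\<lambda>z'. L t y (upd_vec (upd_vec v j w) j z')) field_differentiable (at ((upd_vec v j w) $ j))"
      by (rule hv)
    then show "(\<lambda>w. L t y (upd_vec v j w)) field_differentiable (at w)" by simp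
    assume "w \<in> closed_segment (v$j) (v$j + q)"
    with ev[of w] show "norm (deriv (\<lambda>w. L t y (upd_vec v j w)) w - B) \<le> e"
      by (simp add: dL_dv_def)
  qed
  have two: "norm (L t y V1 - L t y v - B * q) \<le> e * norm q" using 2 by (simp add: V1_def)
  have eq: "L t (upd_vec y j (y$j + p)) V1 - L t y v - (A * p + B * q)
     = (L t (upd_vec y j (y$j + p)) V1 - L t y V1 - A * p) + (L t y V1 - L t y v - B * q)"
    by (simp add: algebra_simps)
  have "norm (L t (upd_vec y j (y$j + p)) V1 - L t y v - (A * p + B * q))
     \<le> norm (L t (upd_vec y j (y$j + p)) V1 - L t y V1 - A * p) + norm (L t y V1 - L t y v - B * q)"
    unfolding eq by (rule norm_triangle_ineq)
  then have "norm (L t (upd_vec y j (y$j + p)) V1 - L t y v - (A * p + B * q)) \<le> e * norm p + e * norm q"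
    using 1 two by simp
  then show ?thesis by (simp add: V1_def distrib_left)
qed



lemma norm_smult_vec: "norm ((k::complex) *s (v::complex^'d)) = norm k * norm v"
proof -
  have "(\<Sum>i\<in>UNIV. (norm ((k *s v) $ i))^2) = (norm k)^2 * (\<Sum>i\<in>UNIV. (norm (v $ i))^2)"
    by (simp add: sum_distrib_left norm_mult power_mult_distrib)
  then show ?thesis by (simp add: norm_vec_def L2_set_def real_sqrt_mult)
qed

lemma cont_upd[continuous_intros]:
  assumes "continuous_on S f" "continuous_on S g"
  shows "continuous_on S (\<lambda>t. upd_vec (f t) j (g t))"
  unfolding upd_vec_def
proof (intro continuous_on_vec_lambda)
  fix i show "continuous_on S (\<lambda>t. if i = j then g t else f t $ i)"
    by (cases "i = j") (auto intro!: continuous_intros assms)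
qed

lemma dist_triple: "dist (t::real, y1::'a::metric_space, v1::'b::metric_space) (t, y, v) \<le> dist y1 y + dist v1 v"
proof -
  have "dist (t, y1, v1) (t, y, v) = sqrt ((dist y1 y)\<^sup>2 + (dist v1 v)\<^sup>2)"
    by (simp add: dist_Pair_Pair)
  also have "\<dots> \<le> \<bar>dist y1 y\<bar> + \<bar>dist v1 v\<bar>" by (rule sqrt_sum_squares_le_sum_abs)
  finally show ?thesis by simp
qed

lemma chi_set_sub: "chi_set a b eps l \<subseteq> {a..b}"
  by (auto simp: chi_set_def)

lemma chi_shift: "t \<in> chi_set a b eps (-l) \<Longrightarrow> t + of_int l * eps \<in> {a..b}"
  by (auto simp: chi_set_def)

lemma chi_shift_iff: "t \<in> chi_set a b eps (-l) \<longleftrightarrow> t + of_int l * eps \<in> chi_set a b eps l"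
  by (auto simp: chi_set_def)

lemma closed_chi: "closed (chi_set a b eps l)"
  by (simp add: chi_set_def)

locale EL =
  fixes a b eps :: real and N :: nat and c :: "int \<Rightarrow> complex"
    and L :: "real \<Rightarrow> complex^'d \<Rightarrow> complex^'d \<Rightarrow> complex"
    and x :: "real \<Rightarrow> complex^'d" and j :: 'd
  assumes ab: "a < b" and eps: "eps > 0"
    and L_cont: "continuous_on ({a..b} \<times> UNIV \<times> UNIV) (\<lambda>(t, y, v). L t y v)"
    and L_hol_x: "\<And>t y v j. t \<in> {a..b} \<Longrightarrow> (\<lambda>z. L t (upd_vec y j z) v) field_differentiable (at (y $ j))"
    and L_hol_v: "\<And>t y v j. t \<in> {a..b} \<Longrightarrow> (\<lambda>z. L t y (upd_vec v j z)) field_differentiable (at (v $ j))"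
    and dLx_cont: "continuous_on ({a..b} \<times> UNIV \<times> UNIV) (\<lambda>(t, y, v). dL_dx L j t y v)"
    and dLv_cont: "continuous_on ({a..b} \<times> UNIV \<times> UNIV) (\<lambda>(t, y, v). dL_dv L j t y v)"
    and x_cont: "continuous_on {a..b} x"
    and critical: "\<And>h. h \<in> Cpw a b eps 0 0 \<Longrightarrow>
        ((\<lambda>\<eta>::real. action_disc a b eps N c L (\<lambda>t. x t + \<eta> *\<^sub>R h t)) has_vector_derivative 0) (at 0)"
begin

definition "cl t = max a (min b t)"
definition "X t = x (cl t)"
definition "V t = box_eps a b eps N c x t"
definition "Lc p = (\<lambda>(t, y, v). L t y v) (cl (fst p), snd p)"
definition "Pc p = (\<lambda>(t, y, v). dL_dx L j t y v) (cl (fst p), snd p)"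
definition "Qc p = (\<lambda>(t, y, v). dL_dv L j t y v) (cl (fst p), snd p)"
definition "P t = Pc (t, X t, V t)"
definition "Q t = Qc (t, X t, V t)"
definition "Csum = (\<Sum>l\<in>{-int N..int N}. norm (c l))"

lemma cl_in: "cl t \<in> {a..b}" using ab by (auto simp: cl_def)
lemma cl_ge: "a \<le> cl t" "cl t \<le> b" using cl_in by auto
lemma cl_id: "t \<in> {a..b} \<Longrightarrow> cl t = t" by (auto simp: cl_def)
lemma cl_cl[simp]: "cl (cl t) = cl t" using cl_id[OF cl_in] .
lemma cl_cont: "continuous_on UNIV cl" unfolding cl_def by (intro continuous_intros)

lemma X_cont: "continuous_on UNIV X"
  unfolding X_def by (rule continuous_on_compose2[OF x_cont cl_cont]) (use cl_in in auto)

lemma X_eq: "t \<in> {a..b} \<Longrightarrow> X t = x t" by (simp add: X_def cl_id)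

lemma clamp_cont:
  fixes F :: "real \<times> 'y::topological_space \<Rightarrow> 'z::topological_space"
  assumes "continuous_on ({a..b} \<times> UNIV) F"
  shows "continuous_on UNIV (\<lambda>p. F (cl (fst p), snd p))"
  by (rule continuous_on_compose2[OF assms]) (auto intro!: continuous_intros continuous_on_compose2[OF cl_cont] simp: cl_ge)

lemma Lc_cont: "continuous_on UNIV Lc"
  unfolding Lc_def by (rule clamp_cont) (use L_cont in simp)
lemma Pc_cont: "continuous_on UNIV Pc"
  unfolding Pc_def by (rule clamp_cont) (use dLx_cont in simp)
lemma Qc_cont: "continuous_on UNIV Qc"
  unfolding Qc_def by (rule clamp_cont) (use dLv_cont in simp)

lemma X_bound: obtains R0 where "R0 \<ge> 0" "\<And>t. norm (X t) \<le> R0"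
proof -
  have "compact (x ` {a..b})" by (intro compact_continuous_image x_cont) auto
  then obtain B where B: "\<And>z. z \<in> x ` {a..b} \<Longrightarrow> norm z \<le> B"
    by (meson compact_imp_bounded bounded_iff)
  have "norm (X t) \<le> B" for t unfolding X_def using B cl_in by blast
  moreover have "x a \<in> x ` {a..b}" using ab by auto
  then have "B \<ge> 0" using B[of "x a"] norm_ge_zero[of "x a"] by linarith
  ultimately show ?thesis using that by blast
qed

lemma V_eq: "V t = box_eps a b eps N c X t"
  unfolding V_def box_eps_def by (auto intro!: sum.cong simp: vec_eq_iff X_eq[OF chi_shift])

lemma V_meas: "V \<in> borel_measurable borel"
  unfolding V_eq[abs_def] by (rule meas_test[OF X_cont])

lemma V_bound: obtains R1 where "R1 \<ge> 0" "\<And>t. norm (V t) \<le> R1"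
proof -
  obtain R0 where R0: "R0 \<ge> 0" "\<And>t. norm (X t) \<le> R0" using X_bound by blast
  have "norm (V t) \<le> Csum * R0" for t
  proof -
    have "norm (V t) \<le> (\<Sum>l\<in>{-int N..int N}. norm (indicator (chi_set a b eps (-l)) t *\<^sub>R (c l *s X (t + of_int l * eps))))"
      unfolding V_eq box_eps_expand by (rule norm_sum)
    also have "\<dots> \<le> (\<Sum>l\<in>{-int N..int N}. norm (c l) * R0)"
      by (intro sum_mono) (auto simp: indicator_def norm_smult_vec intro!: mult_left_mono R0 mult_nonneg_nonneg)
    finally show ?thesis by (simp add: Csum_def sum_distrib_right)
  qed
  moreover have "Csum * R0 \<ge> 0" using R0 by (simp add: Csum_def sum_nonneg)
  ultimately show ?thesis using that by blast
qed

lemma P_eq: "t \<in> {a..b} \<Longrightarrow> P t = dL_dx L j t (x t) (V t)"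
  by (simp add: P_def Pc_def cl_id X_eq)
lemma Q_eq: "t \<in> {a..b} \<Longrightarrow> Q t = dL_dv L j t (x t) (V t)"
  by (simp add: Q_def Qc_def cl_id X_eq)

lemma cont_bound:
  fixes F :: "real \<times> (complex^'d) \<times> (complex^'d) \<Rightarrow> complex"
  assumes "continuous_on UNIV F"
  obtains B where "B \<ge> 0" "\<And>t y v. t \<in> {a..b} \<Longrightarrow> norm y \<le> r \<Longrightarrow> norm v \<le> r \<Longrightarrow> norm (F (t, y, v)) \<le> B"
proof -
  have "compact (F ` ({a..b} \<times> cball 0 r \<times> cball 0 r))"
    by (intro compact_continuous_image continuous_on_subset[OF assms] compact_Times compact_cball) auto
  then obtain B where B: "\<And>z. z \<in> F ` ({a..b} \<times> cball 0 r \<times> cball 0 r) \<Longrightarrow> norm z \<le> B"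
    by (meson compact_imp_bounded bounded_iff)
  have "norm (F (t, y, v)) \<le> max B 0" if "t \<in> {a..b}" "norm y \<le> r" "norm v \<le> r" for t y v
    using B[of "F (t, y, v)"] that by fastforce
  then show ?thesis using that[of "max B 0"] by auto
qed

lemma P_meas: "P \<in> borel_measurable borel"
  unfolding P_def by (rule meas_test2[OF Pc_cont _ V_meas]) (intro borel_measurable_continuous_onI X_cont)
lemma Q_meas: "Q \<in> borel_measurable borel"
  unfolding Q_def by (rule meas_test2[OF Qc_cont _ V_meas]) (intro borel_measurable_continuous_onI X_cont)

lemma P_bound: obtains B where "B \<ge> 0" "\<And>t. norm (P t) \<le> B"
proof -
  obtain R0 where R0: "R0 \<ge> 0" "\<And>t. norm (X t) \<le> R0" using X_bound by blast
  obtain R1 where R1: "R1 \<ge> 0" "\<And>t. norm (V t) \<le> R1" using V_bound by blast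
  obtain B where B: "B \<ge> 0" "\<And>t y v. t \<in> {a..b} \<Longrightarrow> norm y \<le> max R0 R1 \<Longrightarrow> norm v \<le> max R0 R1 \<Longrightarrow> norm (Pc (t, y, v)) \<le> B"
    using cont_bound[OF Pc_cont] by blast
  have "norm (P t) \<le> B" for t
  proof -
    have "P t = Pc (cl t, X t, V t)" by (simp add: P_def Pc_def)
    also have "norm \<dots> \<le> B" using B(2)[OF cl_in] R0 R1 by (meson max.coboundedI1 max.coboundedI2)
    finally show ?thesis .
  qed
  then show ?thesis using that B by blast
qed

lemma Q_bound: obtains B where "B \<ge> 0" "\<And>t. norm (Q t) \<le> B"
proof -
  obtain R0 where R0: "R0 \<ge> 0" "\<And>t. norm (X t) \<le> R0" using X_bound by blast
  obtain R1 where R1: "R1 \<ge> 0" "\<And>t. norm (V t) \<le> R1" using V_bound by blast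
  obtain B where B: "B \<ge> 0" "\<And>t y v. t \<in> {a..b} \<Longrightarrow> norm y \<le> max R0 R1 \<Longrightarrow> norm v \<le> max R0 R1 \<Longrightarrow> norm (Qc (t, y, v)) \<le> B"
    using cont_bound[OF Qc_cont] by blast
  have "norm (Q t) \<le> B" for t
  proof -
    have "Q t = Qc (cl t, X t, V t)" by (simp add: Q_def Qc_def)
    also have "norm \<dots> \<le> B" using B(2)[OF cl_in] R0 R1 by (meson max.coboundedI1 max.coboundedI2)
    finally show ?thesis .
  qed
  then show ?thesis using that B by blast
qed

end


context EL begin

definition "psi \<phi> t = (\<Sum>l\<in>{-int N..int N}. if t \<in> chi_set a b eps (-l) then c l * \<phi> (t + of_int l * eps) else 0)"

lemma psi_meas:
  assumes "continuous_on UNIV \<phi>"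
  shows "psi \<phi> \<in> borel_measurable borel"
proof -
  have "psi \<phi> = (\<lambda>t. \<Sum>l\<in>{-int N..int N}. indicator (chi_set a b eps (-l)) t *\<^sub>R (c l * \<phi> (t + of_int l * eps)))"
    by (auto simp: psi_def indicator_def fun_eq_iff intro!: sum.cong)
  also have "\<dots> \<in> borel_measurable borel"
  proof (intro borel_measurable_sum borel_measurable_scaleR)
    fix l show "(\<lambda>t. c l * \<phi> (t + of_int l * eps)) \<in> borel_measurable borel"
      by (intro borel_measurable_continuous_onI continuous_intros continuous_on_compose2[OF assms]) auto
  qed (auto simp: closed_chi)
  finally show ?thesis .
qed

lemma psi_bound:
  assumes "\<And>t. t \<in> {a..b} \<Longrightarrow> norm (\<phi> t) \<le> M" "M \<ge> 0"
  shows "norm (psi \<phi> t) \<le> Csum * M"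
proof -
  have "norm (psi \<phi> t) \<le> (\<Sum>l\<in>{-int N..int N}. norm (if t \<in> chi_set a b eps (-l) then c l * \<phi> (t + of_int l * eps) else 0))"
    unfolding psi_def by (rule norm_sum)
  also have "\<dots> \<le> (\<Sum>l\<in>{-int N..int N}. norm (c l) * M)"
    by (intro sum_mono) (auto simp: norm_mult intro!: mult_left_mono assms mult_nonneg_nonneg chi_shift)
  finally show ?thesis by (simp add: Csum_def sum_distrib_right)
qed

lemma sc_cpx: "\<eta> *\<^sub>R (z::complex) = of_real \<eta> * z"
  by (simp add: scaleR_conv_of_real)

lemma sc_comp[simp]: "(\<eta> *\<^sub>R (v::complex^'d)) $ i = of_real \<eta> * v $ i"
  unfolding vector_scaleR_component by (rule sc_cpx)

lemma box_pert:
  "box_eps a b eps N c (\<lambda>t. x t + \<eta> *\<^sub>R upd_vec 0 j (\<phi> t)) t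
     = upd_vec (V t) j (V t $ j + of_real \<eta> * psi \<phi> t)"
proof -
  have "box_eps a b eps N c (\<lambda>t. x t + \<eta> *\<^sub>R upd_vec 0 j (\<phi> t)) t $ i
     = upd_vec (V t) j (V t $ j + of_real \<eta> * psi \<phi> t) $ i" for i
  proof (cases "i = j")
    case True
    have "box_eps a b eps N c (\<lambda>t. x t + \<eta> *\<^sub>R upd_vec 0 j (\<phi> t)) t $ i
      = (\<Sum>l\<in>{-int N..int N}. (if t \<in> chi_set a b eps (-l) then c l * (x (t + of_int l * eps) $ j) else 0)
           + of_real \<eta> * (if t \<in> chi_set a b eps (-l) then c l * \<phi> (t + of_int l * eps) else 0))"
      using True by (auto simp: box_eps_def algebra_simps sc_cpx intro!: sum.cong)
    also have "\<dots> = V t $ j + of_real \<eta> * psi \<phi> t"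
      by (simp add: sum.distrib sum_distrib_left V_def box_eps_def psi_def)
    finally show ?thesis using True by simp
  next
    case False
    then show ?thesis by (auto simp: box_eps_def V_def vector_add_component intro!: sum.cong)
  qed
  then show ?thesis by (simp add: vec_eq_iff)
qed

lemma x_pert: "x t + \<eta> *\<^sub>R upd_vec 0 j (\<phi> t) = upd_vec (x t) j (x t $ j + of_real \<eta> * \<phi> t)"
  by (simp add: vec_eq_iff sc_cpx)

end


context EL begin

lemma Csum_nn: "Csum \<ge> 0" by (simp add: Csum_def sum_nonneg)

lemma cont_bound_ab:
  fixes \<phi> :: "real \<Rightarrow> complex"
  assumes "continuous_on UNIV \<phi>"
  obtains M where "M \<ge> 0" "\<And>t. t \<in> {a..b} \<Longrightarrow> norm (\<phi> t) \<le> M"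
proof -
  have "compact (\<phi> ` {a..b})" by (intro compact_continuous_image continuous_on_subset[OF assms]) auto
  then obtain B where B: "\<And>z. z \<in> \<phi> ` {a..b} \<Longrightarrow> norm z \<le> B"
    by (meson compact_imp_bounded bounded_iff)
  have "norm (\<phi> t) \<le> max B 0" if "t \<in> {a..b}" for t using B[of "\<phi> t"] that by fastforce
  then show ?thesis using that[of "max B 0"] by auto
qed

lemma deriv_step:
  assumes phic: "continuous_on UNIV \<phi>" and phia: "\<phi> a = 0" and phib: "\<phi> b = 0"
  shows "integral {a..b} (\<lambda>t. P t * \<phi> t + Q t * psi \<phi> t) = 0"
proof -
  define D where "D t = P t * \<phi> t + Q t * psi \<phi> t" for t
  define h where "h t = upd_vec 0 j (\<phi> t)" for t
  have h_cpw: "h \<in> Cpw a b eps 0 0"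
  proof -
    have "continuous_on UNIV h" unfolding h_def by (intro continuous_intros phic)
    then show ?thesis unfolding Cpw_def using phia phib
      by (auto simp: h_def vec_eq_iff intro: continuous_on_subset)
  qed
  define F where "F \<eta> t = L t (upd_vec (x t) j (x t $ j + of_real \<eta> * \<phi> t))
        (upd_vec (V t) j (V t $ j + of_real \<eta> * psi \<phi> t))" for \<eta> t
  have A_eq: "(\<lambda>\<eta>. action_disc a b eps N c L (\<lambda>t. x t + \<eta> *\<^sub>R h t)) = (\<lambda>\<eta>. integral {a..b} (F \<eta>))"
    unfolding action_disc_def h_def box_pert unfolding x_pert F_def ..
  obtain R0 where R0: "R0 \<ge> 0" "\<And>t. norm (X t) \<le> R0" using X_bound by blast
  obtain R1 where R1: "R1 \<ge> 0" "\<And>t. norm (V t) \<le> R1" using V_bound by blast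
  obtain Mp where Mp: "Mp \<ge> 0" "\<And>t. t \<in> {a..b} \<Longrightarrow> norm (\<phi> t) \<le> Mp"
    using cont_bound_ab[OF phic] by blast
  define M where "M = Mp + Csum * Mp + 1"
  have M_pos: "M > 0" using Mp Csum_nn by (simp add: M_def add_nonneg_pos)
  have phiM: "norm (\<phi> t) \<le> M" if "t \<in> {a..b}" for t
    using Mp(2)[OF that] Mp(1) Csum_nn by (simp add: M_def) (smt (verit) mult_nonneg_nonneg)
  have psiM: "norm (psi \<phi> t) \<le> M" for t
  proof -
    have "norm (psi \<phi> t) \<le> Csum * Mp" by (rule psi_bound) (use Mp in auto)
    then show ?thesis using Mp(1) by (simp add: M_def)
  qed
  have psi_m: "psi \<phi> \<in> borel_measurable borel" by (rule psi_meas[OF phic])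
  have X_m: "X \<in> borel_measurable borel" by (intro borel_measurable_continuous_onI X_cont)
  have phi_m: "\<phi> \<in> borel_measurable borel" by (intro borel_measurable_continuous_onI phic)

  have F_int: "F \<eta> integrable_on {a..b}" for \<eta>
  proof -
    define G where "G p = Lc (fst p, upd_vec (fst (snd p)) j (fst (snd p) $ j + of_real \<eta> * \<phi> (fst p)),
         upd_vec (fst (snd (snd p))) j (fst (snd (snd p)) $ j + of_real \<eta> * snd (snd (snd p))))"
      for p :: "real \<times> (complex^'d) \<times> (complex^'d) \<times> complex"
    have Gc: "continuous_on UNIV G" unfolding G_def
      by (rule continuous_on_compose2[OF Lc_cont]) (auto intro!: continuous_intros continuous_on_compose2[OF phic])
    have Gm: "(\<lambda>t. G (t, X t, V t, psi \<phi> t)) \<in> borel_measurable borel"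
      using X_m V_meas psi_m by (intro measurable_compose[OF _ borel_measurable_continuous_onI[OF Gc]] borel_measurable_Pair measurable_ident_sets) auto
    define r where "r = max R0 R1 + \<bar>\<eta>\<bar> * M"
    obtain B where B: "B \<ge> 0" "\<And>t y v. t \<in> {a..b} \<Longrightarrow> norm y \<le> r \<Longrightarrow> norm v \<le> r \<Longrightarrow> norm (Lc (t, y, v)) \<le> B"
      using cont_bound[OF Lc_cont] by blast
    have "(\<lambda>t. G (t, X t, V t, psi \<phi> t)) integrable_on {a..b}"
    proof (rule bm_integrable[OF Gm])
      fix t assume t: "t \<in> {a..b}"
      have n1: "norm (upd_vec (X t) j (X t $ j + of_real \<eta> * \<phi> t)) \<le> r"
        using norm_upd_le[of "X t" j "of_real \<eta> * \<phi> t"] R0(2)[of t] phiM[OF t]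
        by (simp add: r_def norm_mult) (smt (verit, best) abs_ge_zero mult_left_mono)
      have n2: "norm (upd_vec (V t) j (V t $ j + of_real \<eta> * psi \<phi> t)) \<le> r"
        using norm_upd_le[of "V t" j "of_real \<eta> * psi \<phi> t"] R1(2)[of t] psiM[of t]
        by (simp add: r_def norm_mult) (smt (verit, best) abs_ge_zero mult_left_mono)
      show "norm (G (t, X t, V t, psi \<phi> t)) \<le> B"
        unfolding G_def using B(2)[OF t n1 n2] by simp
    qed
    then show ?thesis
      by (rule integrable_eq) (simp add: G_def F_def Lc_def cl_id X_eq)
  qed

  have D_int: "D integrable_on {a..b}"
  proof -
    obtain BP where BP: "BP \<ge> 0" "\<And>t. norm (P t) \<le> BP" using P_bound by blast
    obtain BQ where BQ: "BQ \<ge> 0" "\<And>t. norm (Q t) \<le> BQ" using Q_bound by blast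
    show ?thesis unfolding D_def
    proof (rule bm_integrable[where B = "BP * M + BQ * M"])
      show "(\<lambda>t. P t * \<phi> t + Q t * psi \<phi> t) \<in> borel_measurable borel"
        using P_meas Q_meas phi_m psi_m by measurable
      fix t assume t: "t \<in> {a..b}"
      have "norm (P t * \<phi> t + Q t * psi \<phi> t) \<le> norm (P t) * norm (\<phi> t) + norm (Q t) * norm (psi \<phi> t)"
        by (metis norm_mult norm_triangle_ineq)
      also have "\<dots> \<le> BP * M + BQ * M"
        by (intro add_mono mult_mono BP BQ phiM t psiM) auto
      finally show "norm (P t * \<phi> t + Q t * psi \<phi> t) \<le> BP * M + BQ * M" .
    qed
  qed
  have est: "\<exists>\<delta>>0. \<forall>\<eta>. \<bar>\<eta>\<bar> < \<delta> \<longrightarrow> (\<forall>t\<in>{a..b}. norm (F \<eta> t - F 0 t - \<eta> *\<^sub>R D t) \<le> e * \<bar>\<eta>\<bar>)"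
    if e: "e > 0" for e
  proof -
    define r where "r = max R0 R1 + 1"
    define K where "K = {a..b} \<times> cball (0::complex^'d) r \<times> cball (0::complex^'d) r"
    have Kc: "compact K" unfolding K_def by (intro compact_Times compact_cball) auto
    have ucx: "uniformly_continuous_on K (\<lambda>(t, y, v). dL_dx L j t y v)"
      by (rule compact_uniformly_continuous[OF continuous_on_subset[OF dLx_cont] Kc]) (auto simp: K_def)
    have ucv: "uniformly_continuous_on K (\<lambda>(t, y, v). dL_dv L j t y v)"
      by (rule compact_uniformly_continuous[OF continuous_on_subset[OF dLv_cont] Kc]) (auto simp: K_def)
    define e' where "e' = e / (2 * M)"
    have e': "e' > 0" using e M_pos by (simp add: e'_def)
    obtain dx where dx: "dx > 0" "\<And>p p'. p \<in> K \<Longrightarrow> p' \<in> K \<Longrightarrow> dist p' p < dx \<Longrightarrow>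
        dist ((\<lambda>(t, y, v). dL_dx L j t y v) p') ((\<lambda>(t, y, v). dL_dx L j t y v) p) < e'"
      using ucx e' unfolding uniformly_continuous_on_def by metis
    obtain dv where dv: "dv > 0" "\<And>p p'. p \<in> K \<Longrightarrow> p' \<in> K \<Longrightarrow> dist p' p < dv \<Longrightarrow>
        dist ((\<lambda>(t, y, v). dL_dv L j t y v) p') ((\<lambda>(t, y, v). dL_dv L j t y v) p) < e'"
      using ucv e' unfolding uniformly_continuous_on_def by metis
    define \<delta> where "\<delta> = min (1 / M) (min dx dv / (2 * M))"
    have \<delta>: "\<delta> > 0" using M_pos dx dv by (simp add: \<delta>_def)
    show ?thesis
    proof (intro exI conjI allI impI ballI)
      show "\<delta> > 0" by (rule \<delta>)
      fix \<eta> t assume \<eta>: "\<bar>\<eta>\<bar> < \<delta>" and t: "t \<in> {a..b}"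
      define p where "p = of_real \<eta> * \<phi> t"
      define q where "q = of_real \<eta> * psi \<phi> t"
      have hM1: "\<bar>\<eta>\<bar> * M \<le> 1"
        using \<eta> M_pos by (simp add: \<delta>_def field_simps)
      have hM2: "\<bar>\<eta>\<bar> * M < min dx dv / 2"
        using \<eta> M_pos by (simp add: \<delta>_def field_simps)
      have hM0: "0 \<le> \<bar>\<eta>\<bar> * M" using M_pos by simp
      have np: "norm p \<le> \<bar>\<eta>\<bar> * M" unfolding p_def norm_mult
        using phiM[OF t] by (simp add: mult_left_mono)
      have nq: "norm q \<le> \<bar>\<eta>\<bar> * M" unfolding q_def norm_mult
        using psiM by (simp add: mult_left_mono)
      have xR: "norm (x t) \<le> R0" using R0(2)[of t] X_eq[OF t] by simp
      have vR: "norm (V t) \<le> R1" by (rule R1(2))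
      have p0K: "(t, x t, V t) \<in> K" using t xR vR by (auto simp: K_def r_def)
      have inK: "(t, y', v') \<in> K" if "norm (y' - x t) \<le> 1" "norm (v' - V t) \<le> 1" for y' v'
      proof -
        have "norm y' \<le> norm (y' - x t) + norm (x t)" using norm_triangle_sub[of y' "x t"] by linarith
        moreover have "norm v' \<le> norm (v' - V t) + norm (V t)" using norm_triangle_sub[of v' "V t"] by linarith
        ultimately show ?thesis using that t xR vR by (auto simp: K_def r_def)
      qed
      have main: "norm (L t (upd_vec (x t) j (x t $ j + p)) (upd_vec (V t) j (V t $ j + q)) - L t (x t) (V t)
          - (P t * p + Q t * q)) \<le> e' * (norm p + norm q)"
      proof (rule two_step_est)
        show "\<And>y v. (\<lambda>z. L t (upd_vec y j z) v) field_differentiable at (y $ j)" using L_hol_x[OF t] .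
        show "\<And>y v. (\<lambda>z. L t y (upd_vec v j z)) field_differentiable at (v $ j)" using L_hol_v[OF t] .
      next
        fix z assume z: "z \<in> closed_segment (x t $ j) (x t $ j + p)"
        have nz: "norm (z - x t $ j) \<le> norm p" using segment_bound(1)[OF z] by simp
        have d1: "norm (upd_vec (x t) j z - x t) \<le> \<bar>\<eta>\<bar> * M" using nz np by (simp add: norm_upd_diff)
        have d2: "norm (upd_vec (V t) j (V t $ j + q) - V t) \<le> \<bar>\<eta>\<bar> * M" using nq by (simp add: norm_upd_diff)
        have p1K: "(t, upd_vec (x t) j z, upd_vec (V t) j (V t $ j + q)) \<in> K"
          using d1 d2 hM1 by (intro inK) auto
        have "dist (t, upd_vec (x t) j z, upd_vec (V t) j (V t $ j + q)) (t, x t, V t)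
            \<le> dist (upd_vec (x t) j z) (x t) + dist (upd_vec (V t) j (V t $ j + q)) (V t)" by (rule dist_triple)
        also have "\<dots> < dx" using d1 d2 hM2 hM0 by (simp add: dist_norm)
        finally have "dist (dL_dx L j t (upd_vec (x t) j z) (upd_vec (V t) j (V t $ j + q))) (dL_dx L j t (x t) (V t)) < e'"
          using dx(2)[OF p0K p1K] by simp
        then show "norm (dL_dx L j t (upd_vec (x t) j z) (upd_vec (V t) j (V t $ j + q)) - P t) \<le> e'"
          by (simp add: dist_norm P_eq[OF t])
      next
        fix w assume w: "w \<in> closed_segment (V t $ j) (V t $ j + q)"
        have nw: "norm (w - V t $ j) \<le> norm q" using segment_bound(1)[OF w] by simp
        have d2: "norm (upd_vec (V t) j w - V t) \<le> \<bar>\<eta>\<bar> * M" using nw nq by (simp add: norm_upd_diff)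
        have p1K: "(t, x t, upd_vec (V t) j w) \<in> K"
          using d2 hM1 by (intro inK) auto
        have "dist (t, x t, upd_vec (V t) j w) (t, x t, V t)
            \<le> dist (x t) (x t) + dist (upd_vec (V t) j w) (V t)" by (rule dist_triple)
        also have "\<dots> < dv" using d2 hM2 hM0 by (simp add: dist_norm)
        finally have "dist (dL_dv L j t (x t) (upd_vec (V t) j w)) (dL_dv L j t (x t) (V t)) < e'"
          using dv(2)[OF p0K p1K] by simp
        then show "norm (dL_dv L j t (x t) (upd_vec (V t) j w) - Q t) \<le> e'"
          by (simp add: dist_norm Q_eq[OF t])
      qed
      have eqF: "F \<eta> t - F 0 t - \<eta> *\<^sub>R D t = L t (upd_vec (x t) j (x t $ j + p)) (upd_vec (V t) j (V t $ j + q)) - L t (x t) (V t)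
          - (P t * p + Q t * q)"
        by (simp add: F_def D_def p_def q_def sc_cpx algebra_simps)
      have "e' * (norm p + norm q) \<le> e' * (2 * (\<bar>\<eta>\<bar> * M))"
        using np nq e' by (intro mult_left_mono) auto
      also have "\<dots> = e * \<bar>\<eta>\<bar>" using M_pos by (simp add: e'_def field_simps)
      finally show "norm (F \<eta> t - F 0 t - \<eta> *\<^sub>R D t) \<le> e * \<bar>\<eta>\<bar>"
        using main eqF by simp
    qed
  qed

  define I where "I = integral {a..b} D"
  have I_deriv: "((\<lambda>\<eta>. integral {a..b} (F \<eta>)) has_vector_derivative I) (at 0)"
    unfolding has_vector_derivative_def has_derivative_iff_norm
  proof (intro conjI)
    show "bounded_linear (\<lambda>h. h *\<^sub>R I)" by (rule bounded_linear_scaleR_left)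
    show "((\<lambda>y. norm (integral {a..b} (F y) - integral {a..b} (F 0) - (y - 0) *\<^sub>R I) / norm (y - 0)) \<longlongrightarrow> 0) (at 0)"
      unfolding LIM_eq
    proof (intro allI impI)
      fix r :: real assume r: "r > 0"
      define e where "e = r / (2 * (b - a))"
      have e: "e > 0" using r ab by (simp add: e_def)
      obtain \<delta> where \<delta>: "\<delta> > 0" "\<And>\<eta> t. \<bar>\<eta>\<bar> < \<delta> \<Longrightarrow> t \<in> {a..b} \<Longrightarrow> norm (F \<eta> t - F 0 t - \<eta> *\<^sub>R D t) \<le> e * \<bar>\<eta>\<bar>"
        using est[OF e] by blast
      show "\<exists>s>0. \<forall>y. y \<noteq> 0 \<and> norm (y - 0) < s \<longrightarrow>
          norm (norm (integral {a..b} (F y) - integral {a..b} (F 0) - (y - 0) *\<^sub>R I) / norm (y - 0) - 0) < r"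
      proof (intro exI conjI allI impI)
        show "\<delta> > 0" by (rule \<delta>(1))
        fix y :: real assume y: "y \<noteq> 0 \<and> norm (y - 0) < \<delta>"
        have eq: "integral {a..b} (F y) - integral {a..b} (F 0) - (y - 0) *\<^sub>R I
            = integral {a..b} (\<lambda>t. F y t - F 0 t - y *\<^sub>R D t)"
        proof -
          have i1: "(\<lambda>t. F y t - F 0 t) integrable_on {a..b}" by (intro integrable_diff F_int)
          have i2: "(\<lambda>t. y *\<^sub>R D t) integrable_on {a..b}" by (intro integrable_cmul D_int)
          have "integral {a..b} (\<lambda>t. F y t - F 0 t - y *\<^sub>R D t)
              = integral {a..b} (\<lambda>t. F y t - F 0 t) - integral {a..b} (\<lambda>t. y *\<^sub>R D t)"
            by (rule integral_diff[OF i1 i2])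
          also have "\<dots> = integral {a..b} (F y) - integral {a..b} (F 0) - (y - 0) *\<^sub>R I"
            by (simp add: integral_diff[OF F_int F_int] I_def)
          finally show ?thesis by simp
        qed
        have "norm (integral {a..b} (\<lambda>t. F y t - F 0 t - y *\<^sub>R D t)) \<le> (e * \<bar>y\<bar>) * measure lborel (cbox a b)"
        proof (rule has_integral_bound)
          show "((\<lambda>t. F y t - F 0 t - y *\<^sub>R D t) has_integral integral {a..b} (\<lambda>t. F y t - F 0 t - y *\<^sub>R D t)) (cbox a b)"
            using F_int D_int by (simp add: integrable_integral integrable_diff integrable_cmul)
          show "\<And>t. t \<in> cbox a b \<Longrightarrow> norm (F y t - F 0 t - y *\<^sub>R D t) \<le> e * \<bar>y\<bar>"
            using \<delta>(2) y by auto
        qed (use e in auto)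
        also have "\<dots> = e * \<bar>y\<bar> * (b - a)" using ab by simp
        finally have nb: "norm (integral {a..b} (\<lambda>t. F y t - F 0 t - y *\<^sub>R D t)) \<le> e * \<bar>y\<bar> * (b - a)" .
        have nb2: "norm (integral {a..b} (F y) - integral {a..b} (F 0) - (y - 0) *\<^sub>R I) \<le> e * \<bar>y\<bar> * (b - a)"
          unfolding eq by (rule nb)
        have yp: "norm (y - 0) > 0" using y by simp
        have "norm (integral {a..b} (F y) - integral {a..b} (F 0) - (y - 0) *\<^sub>R I) / norm (y - 0) \<le> e * (b - a)"
          unfolding pos_divide_le_eq[OF yp] using nb2 by (simp add: mult_ac)
        also have "\<dots> = r / 2" using ab by (simp add: e_def field_simps)
        also have "\<dots> < r" using r by simp
        finally show "norm (norm (integral {a..b} (F y) - integral {a..b} (F 0) - (y - 0) *\<^sub>R I) / norm (y - 0) - 0) < r"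
          by simp
      qed
    qed
  qed
  have "((\<lambda>\<eta>. integral {a..b} (F \<eta>)) has_vector_derivative 0) (at 0)"
    using critical[OF h_cpw] unfolding A_eq .
  then have "I = 0" using I_deriv vector_derivative_unique_at by blast
  moreover have "D = (\<lambda>t. P t * \<phi> t + Q t * psi \<phi> t)" by (simp add: fun_eq_iff D_def)
  ultimately show ?thesis by (simp add: I_def)
qed
end


lemma int_support:
  fixes f :: "real \<Rightarrow> complex"
  assumes "\<And>t. t \<notin> {a..b} \<Longrightarrow> f t = 0" "{a..b} \<subseteq> S"
  shows "integral S f = integral {a..b} f"
proof -
  have "integral S f = integral UNIV (\<lambda>t. if t \<in> S then f t else 0)" by (simp add: integral_restrict_UNIV)
  also have "(\<lambda>t. if t \<in> S then f t else 0) = (\<lambda>t. if t \<in> {a..b} then f t else 0)"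
    using assms by (auto simp: fun_eq_iff)
  also have "integral UNIV \<dots> = integral {a..b} f" by (rule integral_restrict_UNIV)
  finally show ?thesis .
qed

context EL begin

lemma shift_step:
  assumes phic: "continuous_on UNIV \<phi>"
  shows "integral {a..b} (\<lambda>t. Q t * psi \<phi> t) = integral {a..b} (\<lambda>t. box_meps a b eps N c Q t * \<phi> t)"
proof -
  define f where "f l t = (if t \<in> chi_set a b eps (-l) then c l * Q t * \<phi> (t + of_int l * eps) else 0)" for l t
  define g where "g l s = (if s \<in> chi_set a b eps l then c l * Q (s - of_int l * eps) * \<phi> s else 0)" for l s
  obtain Mp where Mp: "Mp \<ge> 0" "\<And>t. t \<in> {a..b} \<Longrightarrow> norm (\<phi> t) \<le> Mp"
    using cont_bound_ab[OF phic] by blast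
  obtain BQ where BQ: "BQ \<ge> 0" "\<And>t. norm (Q t) \<le> BQ" using Q_bound by blast
  have fsupp: "f l t = 0" if "t \<notin> {a..b}" for l t using that by (auto simp: f_def dest: subsetD[OF chi_set_sub])
  have gsupp: "g l t = 0" if "t \<notin> {a..b}" for l t using that by (auto simp: g_def dest: subsetD[OF chi_set_sub])
  have f_int: "f l integrable_on {a..b}" for l
  proof (rule bm_integrable[where B = "norm (c l) * BQ * Mp"])
    have "f l = (\<lambda>t. indicator (chi_set a b eps (-l)) t *\<^sub>R (c l * Q t * \<phi> (t + of_int l * eps)))"
      by (auto simp: f_def fun_eq_iff indicator_def)
    also have "\<dots> \<in> borel_measurable borel"
    proof (intro borel_measurable_scaleR borel_measurable_times)
      show "(\<lambda>t. \<phi> (t + of_int l * eps)) \<in> borel_measurable borel"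
        by (intro borel_measurable_continuous_onI continuous_on_compose2[OF phic] continuous_intros) auto
    qed (auto simp: closed_chi Q_meas)
    finally show "f l \<in> borel_measurable borel" .
    fix t assume t: "t \<in> {a..b}"
    show "norm (f l t) \<le> norm (c l) * BQ * Mp"
      using BQ Mp chi_shift[of t a b eps l]
      by (auto simp: f_def norm_mult intro!: mult_mono mult_nonneg_nonneg)
  qed
  have g_int: "g l integrable_on {a..b}" for l
  proof (rule bm_integrable[where B = "norm (c l) * BQ * Mp"])
    have "g l = (\<lambda>t. indicator (chi_set a b eps l) t *\<^sub>R (c l * Q (t - of_int l * eps) * \<phi> t))"
      by (auto simp: g_def fun_eq_iff indicator_def)
    also have "\<dots> \<in> borel_measurable borel"
    proof (intro borel_measurable_scaleR borel_measurable_times)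
      show "(\<lambda>t. Q (t - of_int l * eps)) \<in> borel_measurable borel"
        by (rule measurable_compose[OF _ Q_meas]) (intro borel_measurable_continuous_onI continuous_intros)
    qed (auto simp: closed_chi borel_measurable_continuous_onI[OF phic])
    finally show "g l \<in> borel_measurable borel" .
    fix t assume t: "t \<in> {a..b}"
    show "norm (g l t) \<le> norm (c l) * BQ * Mp"
      using BQ Mp t
      by (auto simp: g_def norm_mult intro!: mult_mono mult_nonneg_nonneg)
  qed
  have fg: "integral {a..b} (f l) = integral {a..b} (g l)" for l
  proof -
    define d where "d = \<bar>of_int l * eps\<bar>"
    have geq: "g l = (\<lambda>s. f l (s + (- (of_int l * eps))))"
      by (auto simp: fun_eq_iff f_def g_def chi_shift_iff[of "_ - _"])
    have "integral {a..b} (g l) = integral {(a - d) - (- (of_int l * eps)) .. (b + d) - (- (of_int l * eps))} (g l)"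
      by (rule int_support[symmetric]) (use gsupp in \<open>auto simp: d_def\<close>)
    also have "\<dots> = integral {(a - d) - (- (of_int l * eps)) .. (b + d) - (- (of_int l * eps))} (\<lambda>s. f l (s + (- (of_int l * eps))))"
      by (simp only: geq)
    also have "\<dots> = integral {a - d .. b + d} (f l)"
      by (rule integral_shift_real_ivl)
    also have "\<dots> = integral {a..b} (f l)"
      by (rule int_support) (use fsupp in \<open>auto simp: d_def\<close>)
    finally show ?thesis by simp
  qed
  have "(\<lambda>t. Q t * psi \<phi> t) = (\<lambda>t. \<Sum>l\<in>{-int N..int N}. f l t)"
    by (auto simp: fun_eq_iff psi_def f_def sum_distrib_left intro!: sum.cong)
  then have "integral {a..b} (\<lambda>t. Q t * psi \<phi> t) = (\<Sum>l\<in>{-int N..int N}. integral {a..b} (f l))"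
    using f_int by (simp add: integral_sum)
  also have "\<dots> = (\<Sum>l\<in>{-int N..int N}. integral {a..b} (g l))" using fg by simp
  also have "\<dots> = integral {a..b} (\<lambda>t. \<Sum>l\<in>{-int N..int N}. g l t)"
    using g_int by (simp add: integral_sum)
  also have "(\<lambda>t. \<Sum>l\<in>{-int N..int N}. g l t) = (\<lambda>t. box_meps a b eps N c Q t * \<phi> t)"
    by (auto simp: fun_eq_iff box_meps_def g_def sum_distrib_right intro!: sum.cong)
  finally show ?thesis .
qed

end


context EL begin

definition "gg t = box_meps a b eps N c Q t + P t"

lemma Qshift_meas: "(\<lambda>t. Q (t - of_int l * eps)) \<in> borel_measurable borel"
  by (rule measurable_compose[OF _ Q_meas]) (intro borel_measurable_continuous_onI continuous_intros)

lemma bm_meas: "box_meps a b eps N c Q \<in> borel_measurable borel"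
proof -
  have "box_meps a b eps N c Q = (\<lambda>t. \<Sum>l\<in>{-int N..int N}. indicator (chi_set a b eps l) t *\<^sub>R (c l * Q (t - of_int l * eps)))"
    by (auto simp: box_meps_def fun_eq_iff indicator_def intro!: sum.cong)
  also have "\<dots> \<in> borel_measurable borel"
    by (intro borel_measurable_sum borel_measurable_scaleR borel_measurable_times Qshift_meas)
       (auto simp: closed_chi)
  finally show ?thesis .
qed

lemma bm_bound: "norm (box_meps a b eps N c Q t) \<le> Csum * BQ" if "\<And>t. norm (Q t) \<le> BQ" "BQ \<ge> 0"
proof -
  have "norm (box_meps a b eps N c Q t) \<le> (\<Sum>l\<in>{-int N..int N}. norm (if t \<in> chi_set a b eps l then c l * Q (t - of_int l * eps) else 0))"
    unfolding box_meps_def by (rule norm_sum)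
  also have "\<dots> \<le> (\<Sum>l\<in>{-int N..int N}. norm (c l) * BQ)"
    by (intro sum_mono) (auto simp: norm_mult intro!: mult_left_mono that mult_nonneg_nonneg)
  finally show ?thesis by (simp add: Csum_def sum_distrib_right)
qed

lemma gg_meas: "gg \<in> borel_measurable borel"
  unfolding gg_def[abs_def] using bm_meas P_meas by measurable

lemma gg_bound: obtains Bg where "Bg \<ge> 0" "\<And>t. norm (gg t) \<le> Bg"
proof -
  obtain BP where BP: "BP \<ge> 0" "\<And>t. norm (P t) \<le> BP" using P_bound by blast
  obtain BQ where BQ: "BQ \<ge> 0" "\<And>t. norm (Q t) \<le> BQ" using Q_bound by blast
  have "norm (gg t) \<le> Csum * BQ + BP" for t
    unfolding gg_def using norm_triangle_ineq[of "box_meps a b eps N c Q t" "P t"] bm_bound[OF BQ(2) BQ(1), of t] BP(2)[of t]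
    by linarith
  moreover have "Csum * BQ + BP \<ge> 0" using Csum_nn BQ BP by simp
  ultimately show ?thesis using that by blast
qed

lemma gg_weak:
  assumes phic: "continuous_on UNIV \<phi>" and phia: "\<phi> a = 0" and phib: "\<phi> b = 0"
  shows "integral {a..b} (\<lambda>t. gg t * \<phi> t) = 0"
proof -
  obtain Mp where Mp: "Mp \<ge> 0" "\<And>t. t \<in> {a..b} \<Longrightarrow> norm (\<phi> t) \<le> Mp"
    using cont_bound_ab[OF phic] by blast
  obtain BP where BP: "BP \<ge> 0" "\<And>t. norm (P t) \<le> BP" using P_bound by blast
  obtain BQ where BQ: "BQ \<ge> 0" "\<And>t. norm (Q t) \<le> BQ" using Q_bound by blast
  have phi_m: "\<phi> \<in> borel_measurable borel" by (intro borel_measurable_continuous_onI phic)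
  have i1: "(\<lambda>t. P t * \<phi> t) integrable_on {a..b}"
    by (rule bm_integrable[where B = "BP * Mp"]) (use P_meas phi_m BP Mp in \<open>auto simp: norm_mult intro!: mult_mono\<close>)
  have psiB: "norm (psi \<phi> t) \<le> Csum * Mp" for t by (rule psi_bound) (use Mp in auto)
  have i2: "(\<lambda>t. Q t * psi \<phi> t) integrable_on {a..b}"
    by (rule bm_integrable[where B = "BQ * (Csum * Mp)"])
       (use Q_meas psi_meas[OF phic] BQ psiB Csum_nn Mp in \<open>auto simp: norm_mult intro!: mult_mono\<close>)
  have i3: "(\<lambda>t. box_meps a b eps N c Q t * \<phi> t) integrable_on {a..b}"
    by (rule bm_integrable[where B = "(Csum * BQ) * Mp"])
       (use bm_meas phi_m bm_bound[OF BQ(2) BQ(1)] Mp Csum_nn BQ in \<open>auto simp: norm_mult intro!: mult_mono\<close>)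
  have "0 = integral {a..b} (\<lambda>t. P t * \<phi> t + Q t * psi \<phi> t)" using deriv_step[OF assms] by simp
  also have "\<dots> = integral {a..b} (\<lambda>t. P t * \<phi> t) + integral {a..b} (\<lambda>t. Q t * psi \<phi> t)"
    by (rule integral_add[OF i1 i2])
  also have "\<dots> = integral {a..b} (\<lambda>t. P t * \<phi> t) + integral {a..b} (\<lambda>t. box_meps a b eps N c Q t * \<phi> t)"
    using shift_step[OF phic] by simp
  also have "\<dots> = integral {a..b} (\<lambda>t. P t * \<phi> t + box_meps a b eps N c Q t * \<phi> t)"
    by (rule integral_add[OF i1 i3, symmetric])
  also have "\<dots> = integral {a..b} (\<lambda>t. gg t * \<phi> t)"
    by (simp add: gg_def algebra_simps)
  finally show ?thesis by simp
qed

end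


lemma seq_to_1:
  fixes c d s :: real
  assumes "c < s" "s < d"
  shows "(\<lambda>k. min 1 (max 0 (real (Suc k) * (s - c))) * min 1 (max 0 (real (Suc k) * (d - s)))) \<longlonglongrightarrow> 1"
proof (rule tendsto_eventually)
  obtain K :: nat where K: "max (1 / (s - c)) (1 / (d - s)) < real K" using reals_Archimedean2 by blast
  show "\<forall>\<^sub>F k in sequentially. min 1 (max 0 (real (Suc k) * (s - c))) * min 1 (max 0 (real (Suc k) * (d - s))) = 1"
    unfolding eventually_sequentially
  proof (intro exI allI impI)
    fix k assume k: "K \<le> k"
    then have kk: "real K \<le> real (Suc k)" by simp
    have "1 / (s - c) < real (Suc k)" using K kk by linarith
    then have 1: "1 \<le> real (Suc k) * (s - c)" using assms by (simp add: field_simps)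
    have "1 / (d - s) < real (Suc k)" using K kk by linarith
    then have 2: "1 \<le> real (Suc k) * (d - s)" using assms by (simp add: field_simps)
    show "min 1 (max 0 (real (Suc k) * (s - c))) * min 1 (max 0 (real (Suc k) * (d - s))) = 1"
      using 1 2 by simp
  qed
qed

lemma fund_lemma:
  fixes g :: "real \<Rightarrow> complex"
  assumes ab: "a < b" and gm: "g \<in> borel_measurable borel" and gb: "\<And>t. norm (g t) \<le> Bg"
    and weak: "\<And>\<phi>. continuous_on UNIV \<phi> \<Longrightarrow> \<phi> a = 0 \<Longrightarrow> \<phi> b = 0 \<Longrightarrow> integral {a..b} (\<lambda>t. g t * \<phi> t) = 0"
  shows "AE t in lborel. t \<in> {a..b} \<longrightarrow> g t = 0"
proof -
  have g_int: "g integrable_on {a..b}" by (rule bm_integrable[OF gm]) (use gb in auto)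
  define G0 where "G0 t = (if t \<in> {a..b} then g t else 0)" for t
  have gm1: "(\<lambda>t. g t * \<phi> t) \<in> borel_measurable borel" if "continuous_on UNIV \<phi>" for \<phi> :: "real \<Rightarrow> complex"
    using gm borel_measurable_continuous_onI[OF that] by measurable
  have step1: "integral {u..w} G0 = 0" for u w
  proof -
    define c' where "c' = max a u"
    define d' where "d' = min b w"
    have "integral {u..w} G0 = integral UNIV (\<lambda>t. if t \<in> {u..w} then G0 t else 0)"
      by (rule integral_restrict_UNIV[symmetric])
    also have "(\<lambda>t. if t \<in> {u..w} then G0 t else 0) = (\<lambda>t. if t \<in> {c'..d'} then g t else 0)"
      by (auto simp: fun_eq_iff G0_def c'_def d'_def)
    finally have r: "integral {u..w} G0 = integral UNIV (\<lambda>t. if t \<in> {c'..d'} then g t else 0)" .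
    show ?thesis
    proof (cases "c' < d'")
      case True
      define \<phi> where "\<phi> k s = complex_of_real (min 1 (max 0 (real (Suc k) * (s - c'))) * min 1 (max 0 (real (Suc k) * (d' - s))))" for k s
      define lim where "lim t = g t * (if c' < t \<and> t < d' then 1 else 0)" for t
      have phic: "continuous_on UNIV (\<phi> k)" for k unfolding \<phi>_def by (intro continuous_intros)
      have phi1: "norm (\<phi> k s) \<le> 1" for k s
        unfolding \<phi>_def norm_of_real by (auto simp: abs_mult intro!: mult_le_one)
      have ac: "a \<le> c'" and db: "d' \<le> b" by (auto simp: c'_def d'_def)
      have phia: "\<phi> k a = 0" for k
      proof -
        have "real (Suc k) * (a - c') \<le> 0" using ac by (simp add: mult_nonneg_nonpos)
        then show ?thesis by (simp add: \<phi>_def)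
      qed
      have phib: "\<phi> k b = 0" for k
      proof -
        have "real (Suc k) * (d' - b) \<le> 0" using db by (simp add: mult_nonneg_nonpos)
        then show ?thesis by (simp add: \<phi>_def)
      qed
      have conv: "(\<lambda>k. g t * \<phi> k t) \<longlonglongrightarrow> lim t" for t
      proof (cases "c' < t \<and> t < d'")
        case True
        then have "(\<lambda>k. \<phi> k t) \<longlonglongrightarrow> complex_of_real 1"
          unfolding \<phi>_def by (intro tendsto_of_real seq_to_1) auto
        then show ?thesis using True by (auto simp: lim_def intro!: tendsto_mult_left[where c = "g t" and l = 1, simplified])
      next
        case nF: False
        have "\<phi> k t = 0" for k
        proof (cases "c' < t")
          case False
          then have "real (Suc k) * (t - c') \<le> 0" by (simp add: mult_nonneg_nonpos)
          then show ?thesis by (simp add: \<phi>_def)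
        next
          case True
          with nF have "\<not> t < d'" by simp
          then have "real (Suc k) * (d' - t) \<le> 0" by (simp add: mult_nonneg_nonpos)
          then show ?thesis by (simp add: \<phi>_def)
        qed
        then show ?thesis using nF by (auto simp: lim_def)
      qed
      have gpb: "norm (g t * \<phi> k t) \<le> Bg" for k t
      proof -
        have "norm (g t * \<phi> k t) \<le> Bg * 1" unfolding norm_mult
          using gb phi1 by (intro mult_mono) (auto intro: order_trans[OF norm_ge_zero gb])
        then show ?thesis by simp
      qed
      have fint: "(\<lambda>t. g t * \<phi> k t) integrable_on {a..b}" for k
        by (rule bm_integrable[OF gm1[OF phic], where B = Bg]) (rule gpb)
      have dc: "(\<lambda>k. integral {a..b} (\<lambda>t. g t * \<phi> k t)) \<longlonglongrightarrow> integral {a..b} lim"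
      proof (rule dominated_convergence(2)[where h = "\<lambda>_. Bg"])
        show "(\<lambda>_. Bg) integrable_on {a..b}" by (rule integrable_const_ivl)
        show "norm (g t * \<phi> k t) \<le> Bg" for k t by (rule gpb)
      qed (use fint conv in auto)
      moreover have "(\<lambda>k. integral {a..b} (\<lambda>t. g t * \<phi> k t)) = (\<lambda>k. 0)"
        using weak[OF phic phia phib] by auto
      ultimately have l0: "integral {a..b} lim = 0" using LIMSEQ_unique tendsto_const by metis
      have "integral {a..b} lim = integral UNIV (\<lambda>t. if t \<in> {a..b} then lim t else 0)"
        by (rule integral_restrict_UNIV[symmetric])
      also have "\<dots> = integral UNIV (\<lambda>t. if t \<in> {c'..d'} then g t else 0)"
      proof (rule integral_spike[of "{c', d'}"])
        show "negligible {c', d'}" by simp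
      qed (use ac db in \<open>auto simp: lim_def\<close>)
      finally show ?thesis using r l0 by simp
    next
      case False
      have "((\<lambda>t. if t \<in> {c'..d'} then g t else 0) has_integral 0) UNIV"
        by (rule has_integral_negligible[of "{c'}"]) (use False in auto)
      then have "integral UNIV (\<lambda>t. if t \<in> {c'..d'} then g t else 0) = 0"
        by (rule integral_unique)
      then show ?thesis using r by simp
    qed
  qed
  have G0_int: "G0 integrable_on cbox u w" for u w
  proof -
    have "G0 integrable_on UNIV" unfolding G0_def using g_int integrable_restrict_UNIV[of "{a..b}" g] by blast
    then show ?thesis by (rule integrable_on_subcbox) auto
  qed
  obtain NN where NN: "negligible NN"
    "\<And>x e. \<lbrakk>x \<notin> NN; 0 < e\<rbrakk> \<Longrightarrow> \<exists>d>0. \<forall>h. 0 < h \<and> h < d \<longrightarrow>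
        norm (integral (cbox x (x + h *\<^sub>R One)) G0 /\<^sub>R h ^ DIM(real) - G0 x) < e"
    using integrable_ccontinuous_explicit[OF G0_int] by blast
  have G0z: "G0 t = 0" if tN: "t \<notin> NN" for t
  proof (rule ccontr)
    assume ne: "G0 t \<noteq> 0"
    obtain d where d: "d > 0" "\<And>h. 0 < h \<and> h < d \<Longrightarrow>
        norm (integral (cbox t (t + h *\<^sub>R One)) G0 /\<^sub>R h ^ DIM(real) - G0 t) < norm (G0 t)"
      using NN(2)[OF tN, of "norm (G0 t)"] ne by auto
    have "norm (integral (cbox t (t + (d/2) *\<^sub>R One)) G0 /\<^sub>R (d/2) ^ DIM(real) - G0 t) < norm (G0 t)"
      using d(2)[of "d/2"] d(1) by simp
    moreover have "integral (cbox t (t + (d/2) *\<^sub>R One)) G0 = 0"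
      using step1[of t "t + d/2"] by simp
    ultimately show False by simp
  qed
  have "AE t in lebesgue. t \<notin> NN"
    using NN(1) by (intro AE_not_in) (simp add: negligible_iff_null_sets)
  then have "AE t in lebesgue. t \<in> {a..b} \<longrightarrow> g t = 0"
  proof eventually_elim
    case (elim t)
    show ?case using G0z[OF elim] by (auto simp: G0_def split: if_splits)
  qed
  then show ?thesis by (simp add: AE_completion_iff)
qed



lemma chi_shift2: "t \<in> chi_set a b eps l \<Longrightarrow> t - of_int l * eps \<in> {a..b}"
  by (auto simp: chi_set_def)

context EL begin

lemma final:
  "AE t in lborel. t \<in> {a..b} \<longrightarrow>
      box_meps a b eps N c (\<lambda>s. dL_dv L j s (x s) (box_eps a b eps N c x s)) t
      + dL_dx L j t (x t) (box_eps a b eps N c x t) = 0"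
proof -
  obtain Bg where Bg: "Bg \<ge> 0" "\<And>t. norm (gg t) \<le> Bg" using gg_bound by blast
  have "AE t in lborel. t \<in> {a..b} \<longrightarrow> gg t = 0"
    by (rule fund_lemma[OF ab gg_meas Bg(2) gg_weak])
  then show ?thesis
  proof eventually_elim
    case (elim t)
    show ?case
    proof
      assume t: "t \<in> {a..b}"
      have "box_meps a b eps N c Q t = box_meps a b eps N c (\<lambda>s. dL_dv L j s (x s) (box_eps a b eps N c x s)) t"
        unfolding box_meps_def by (auto intro!: sum.cong simp: Q_eq[OF chi_shift2] V_def)
      moreover have "P t = dL_dx L j t (x t) (box_eps a b eps N c x t)" by (simp add: P_eq[OF t] V_def)
      ultimately show "box_meps a b eps N c (\<lambda>s. dL_dv L j s (x s) (box_eps a b eps N c x s)) t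
          + dL_dx L j t (x t) (box_eps a b eps N c x t) = 0"
        using elim t by (simp add: gg_def)
    qed
  qed
qed

end

theorem mainTheorem2:
  fixes a b eps :: real and N :: nat and c :: "int \<Rightarrow> complex"
    and alpha beta :: "complex^'d"
    and L :: "real \<Rightarrow> complex^'d \<Rightarrow> complex^'d \<Rightarrow> complex"
    and x :: "real \<Rightarrow> complex^'d"
  assumes ab: "a < b" and eps: "eps > 0" and N: "N \<ge> 1"
    and L_cont: "continuous_on ({a..b} \<times> UNIV \<times> UNIV) (\<lambda>(t, y, v). L t y v)"
    and L_hol_x: "\<And>t y v j. t \<in> {a..b} \<Longrightarrow> (\<lambda>z. L t (upd_vec y j z) v) field_differentiable (at (y $ j))"
    and L_hol_v: "\<And>t y v j. t \<in> {a..b} \<Longrightarrow> (\<lambda>z. L t y (upd_vec v j z)) field_differentiable (at (v $ j))"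
    and dLx_cont: "\<And>j. continuous_on ({a..b} \<times> UNIV \<times> UNIV) (\<lambda>(t, y, v). dL_dx L j t y v)"
    and dLv_cont: "\<And>j. continuous_on ({a..b} \<times> UNIV \<times> UNIV) (\<lambda>(t, y, v). dL_dv L j t y v)"
    and x_pw: "x \<in> Cpw a b eps alpha beta"
    and critical: "\<And>h. h \<in> Cpw a b eps 0 0 \<Longrightarrow>
        ((\<lambda>\<eta>::real. action_disc a b eps N c L (\<lambda>t. x t + \<eta> *\<^sub>R h t)) has_vector_derivative 0) (at 0)"
  shows "\<forall>j. AE t in lborel. t \<in> {a..b} \<longrightarrow>
      box_meps a b eps N c (\<lambda>s. dL_dv L j s (x s) (box_eps a b eps N c x s)) t
      + dL_dx L j t (x t) (box_eps a b eps N c x t) = 0"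
proof
  fix j :: 'd
  interpret EL a b eps N c L x j
  proof (unfold_locales)
    show "continuous_on {a..b} x" by (rule cpw_cont[OF x_pw eps])
  qed (use ab eps L_cont L_hol_x L_hol_v dLx_cont dLv_cont critical in auto)
  show "AE t in lborel. t \<in> {a..b} \<longrightarrow>
      box_meps a b eps N c (\<lambda>s. dL_dv L j s (x s) (box_eps a b eps N c x s)) t
      + dL_dx L j t (x t) (box_eps a b eps N c x t) = 0"
    by (rule final)
qed


end
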